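(* $\beta_2\geqslant\sqrt{7}$. More precisely, there exists a set $P$ of $19$ points in the Euclidean plane such that the largest edge-length of a bottleneck spanning tree of $P$ equals $1$, while every Hamiltonian path on $P$ (i.e., every spanning tree of $P$ of maximum degree at most $2$) has an edge of length at least $\sqrt{7}$.
   Context: For a finite point set $P$ in the plane, consider the complete graph on $P$ with edge weights equal to Euclidean distances. A bottleneck spanning tree (BST) of $P$ is a spanning tree minimizing the largest edge-length. For an integer $K\geqslant 2$, a bottleneck degree-$K$ spanning tree is a spanning tree of maximum degree at most $K$ minimizing the largest edge-length. $\beta_K$ denotes the supremum, over all finite point sets in the Euclidean plane, of the ratio of the largest edge-length of a bottleneck degree-$K$ spanning tree to the largest edge-length of a BST. *)

theory Defs
  imports "HOL-Analysis.Analysis"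
begin

type_synonym point = "real ^ 2"

definition edges_on :: "point set \<Rightarrow> point set set \<Rightarrow> bool" where
  "edges_on P T \<longleftrightarrow> T \<subseteq> {{p, q} | p q. p \<in> P \<and> q \<in> P \<and> p \<noteq> q}"

definition adj :: "point set set \<Rightarrow> (point \<times> point) set" where
  "adj T = {(p, q). {p, q} \<in> T}"

definition graph_connected :: "point set \<Rightarrow> point set set \<Rightarrow> bool" where
  "graph_connected P T \<longleftrightarrow> (\<forall>p\<in>P. \<forall>q\<in>P. (p, q) \<in> (adj T)\<^sup>*)"

definition spanning_tree :: "point set \<Rightarrow> point set set \<Rightarrow> bool" where
  "spanning_tree P T \<longleftrightarrow> edges_on P T \<and> graph_connected P T \<and>
     (\<forall>e\<in>T. \<not> graph_connected P (T - {e}))"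

definition deg :: "point set set \<Rightarrow> point \<Rightarrow> nat" where
  "deg T v = card {e \<in> T. v \<in> e}"

definition max_edge :: "point set set \<Rightarrow> real" where
  "max_edge T = Max (insert 0 {dist p q | p q. {p, q} \<in> T})"

definition bst_val :: "point set \<Rightarrow> real" where
  "bst_val P = Min {max_edge T | T. spanning_tree P T}"

definition bdeg_val :: "nat \<Rightarrow> point set \<Rightarrow> real" where
  "bdeg_val K P = Min {max_edge T | T. spanning_tree P T \<and> (\<forall>v\<in>P. deg T v \<le> K)}"

definition beta :: "nat \<Rightarrow> ereal" where
  "beta K = Sup {ereal (bdeg_val K P / bst_val P) | P. finite P \<and> card P \<ge> 2}"

end

theory Submission
  imports Defs
begin

definition nbr :: "point set set \<Rightarrow> point \<Rightarrow> point set" where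
  "nbr T p = {q. {p, q} \<in> T}"

lemma edge_props:
  assumes "edges_on P T" "{p, q} \<in> T" shows "p \<noteq> q" "p \<in> P" "q \<in> P"
proof -
  obtain x y where xy: "{p, q} = {x, y}" "x \<in> P" "y \<in> P" "x \<noteq> y"
    using assms unfolding edges_on_def by blast
  then have "(p = x \<and> q = y) \<or> (p = y \<and> q = x)" by (simp add: doubleton_eq_iff)
  then show "p \<noteq> q" "p \<in> P" "q \<in> P" using xy by auto
qed

lemma nbr_sym: "q \<in> nbr T p \<longleftrightarrow> p \<in> nbr T q"
  by (simp add: nbr_def insert_commute)

lemma nbr_sub: "edges_on P T \<Longrightarrow> nbr T p \<subseteq> P"
  unfolding nbr_def using edge_props(3)[of P T p] by blast

lemma nbr_fin: "finite P \<Longrightarrow> edges_on P T \<Longrightarrow> finite (nbr T p)"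
  by (rule finite_subset[OF nbr_sub]) assumption+

lemma nbr_irr: "edges_on P T \<Longrightarrow> p \<notin> nbr T p"
  unfolding nbr_def using edge_props(1)[of P T p p] by auto

lemma adj_iff: "(p, q) \<in> adj T \<longleftrightarrow> q \<in> nbr T p"
  by (simp add: adj_def nbr_def)

lemma deg_nbr:
  assumes ep: "edges_on P T" shows "deg T p = card (nbr T p)"
proof -
  have eq: "{e \<in> T. p \<in> e} = (\<lambda>q. {p, q}) ` nbr T p"
  proof
    show "{e \<in> T. p \<in> e} \<subseteq> (\<lambda>q. {p, q}) ` nbr T p"
    proof
      fix e assume e: "e \<in> {e \<in> T. p \<in> e}"
      then obtain x y where "e = {x, y}" using ep unfolding edges_on_def by blast
      then have "p = x \<or> p = y" using e by blast
      then have "\<exists>q. e = {p, q}" using \<open>e = {x, y}\<close> by (metis insert_commute)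
      then obtain q where q: "e = {p, q}" by blast
      then have "q \<in> nbr T p" using e unfolding nbr_def by simp
      then show "e \<in> (\<lambda>q. {p, q}) ` nbr T p" using q by blast
    qed
    show "(\<lambda>q. {p, q}) ` nbr T p \<subseteq> {e \<in> T. p \<in> e}" unfolding nbr_def by auto
  qed
  have inj: "inj_on (\<lambda>q. {p, q}) (nbr T p)"
    using nbr_irr[OF ep, of p] by (auto simp: inj_on_def doubleton_eq_iff)
  show ?thesis unfolding deg_def eq by (rule card_image[OF inj])
qed

lemma edges_on_finite: "finite P \<Longrightarrow> edges_on P T \<Longrightarrow> finite T"
proof -
  assume f: "finite P" and e: "edges_on P T"
  have "T \<subseteq> Pow P" using e unfolding edges_on_def by blast
  then show ?thesis using f by (meson finite_Pow_iff finite_subset)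
qed

lemma closed_reach:
  assumes "(x, y) \<in> (adj T)\<^sup>*" "x \<in> S" "\<forall>z\<in>S. nbr T z \<subseteq> S" shows "y \<in> S"
  using assms(1) proof (induction rule: rtrancl_induct)
  case base then show ?case using assms(2) .
next
  case (step y z) then show ?case using assms(3) adj_iff by blast
qed

lemma two_card:
  assumes "finite X" "card X \<le> 2" "x \<in> X" "y \<in> X" "x \<noteq> y" shows "X = {x, y}"
proof -
  have s: "{x, y} \<subseteq> X" using assms by auto
  have c: "card {x, y} = 2" using assms by auto
  have "card {x,y} \<le> card X" using card_mono[OF assms(1) s] .
  then have "card {x, y} = card X" using c assms(2) by linarith
  then show ?thesis using card_subset_eq[OF assms(1) s] by simp
qed

lemma leaf3:
  assumes ep: "edges_on P T" and fin: "finite P" and con: "graph_connected P T"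
    and d2: "\<forall>v\<in>P. card (nbr T v) \<le> 2"
    and ab: "a \<in> P" "b \<in> P" "c \<in> P" "a \<noteq> b" "a \<noteq> c" "b \<noteq> c"
    and la: "card (nbr T a) = 1" "card (nbr T b) = 1" "card (nbr T c) = 1"
  shows False
proof -
  let ?R = "adj T"
  have "(a, b) \<in> ?R\<^sup>*" using con ab unfolding graph_connected_def by blast
  then obtain m where m: "(a, b) \<in> ?R ^^ m" using rtrancl_power by blast
  define n where "n = (LEAST m. (a, b) \<in> ?R ^^ m)"
  have abn: "(a, b) \<in> ?R ^^ n" unfolding n_def by (rule LeastI[of _ m]) (rule m)
  have nmin: "\<And>k. (a, b) \<in> ?R ^^ k \<Longrightarrow> n \<le> k" unfolding n_def by (rule Least_le)
  obtain f where f0: "f 0 = a" and fn: "f n = b" and fs: "\<forall>i<n. (f i, f (Suc i)) \<in> ?R"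
    using abn unfolding relpow_fun_conv by blast
  have n1: "n \<noteq> 0"
  proof
    assume "n = 0" then show False using f0 fn ab(4) by simp
  qed
  have fst: "\<And>i. i < n \<Longrightarrow> f (Suc i) \<in> nbr T (f i)" using fs adj_iff by blast
  have fst': "\<And>i. i < n \<Longrightarrow> f i \<in> nbr T (f (Suc i))" using fst nbr_sym by blast
  have inj: "f i \<noteq> f j" if ij: "i < j" "j \<le> n" for i j
  proof
    assume eq: "f i = f j"
    define g where "g k = (if k \<le> i then f k else f (k + (j - i)))" for k
    have "(a, b) \<in> ?R ^^ (n - (j - i))"
      unfolding relpow_fun_conv
    proof (intro exI[of _ g] conjI allI impI)
      show "g 0 = a" using f0 by (simp add: g_def)
      show "g (n - (j - i)) = b"
      proof (cases "n - (j - i) \<le> i")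
        case True
        then have "n - (j - i) = i" "j = n" using ij by arith+
        then show ?thesis using eq fn by (simp add: g_def)
      next
        case False
        then show ?thesis using ij fn by (simp add: g_def)
      qed
      fix k assume k: "k < n - (j - i)"
      show "(g k, g (Suc k)) \<in> ?R"
      proof (cases "k < i")
        case True
        then show ?thesis using fs ij by (simp add: g_def)
      next
        case False
        show ?thesis
        proof (cases "k = i")
          case True
          have "j < n" using k True ij by arith
          then have "(f j, f (Suc j)) \<in> ?R" using fs by blast
          moreover have "Suc k + (j - i) = Suc j" using True ij by arith
          ultimately show ?thesis using True eq by (simp add: g_def)
        next
          case False2: False
          have "k + (j - i) < n" using k ij by arith
          then have "(f (k + (j - i)), f (Suc (k + (j - i)))) \<in> ?R" using fs by blast
          then show ?thesis using False False2 by (simp add: g_def)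
        qed
      qed
    qed
    then have "n \<le> n - (j - i)" by (rule nmin)
    then show False using ij by arith
  qed
  have fP: "i \<le> n \<Longrightarrow> f i \<in> P" for i
  proof (induction i)
    case 0 then show ?case using f0 ab by simp
  next
    case (Suc i)
    then have "f (Suc i) \<in> nbr T (f i)" using fst by simp
    then show ?case using nbr_sub[OF ep] by blast
  qed
  define S where "S = f ` {..n}"
  have mid: "nbr T (f i) = {f (i - 1), f (Suc i)}" if i: "0 < i" "i < n" for i
  proof (rule two_card)
    show "finite (nbr T (f i))" using nbr_fin[OF fin ep] .
    show "card (nbr T (f i)) \<le> 2" using d2 fP i by simp
    show "f (i - 1) \<in> nbr T (f i)" using fst'[of "i - 1"] i by simp
    show "f (Suc i) \<in> nbr T (f i)" using fst i by simp
    show "f (i - 1) \<noteq> f (Suc i)" using inj i by simp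
  qed
  have closed: "\<forall>z\<in>S. nbr T z \<subseteq> S"
  proof
    fix z assume "z \<in> S"
    then obtain i where i: "i \<le> n" "z = f i" unfolding S_def by blast
    consider "i = 0" | "i = n" | "0 < i" "i < n" using i by arith
    then show "nbr T z \<subseteq> S"
    proof cases
      case 1
      have "f 1 \<in> nbr T a" using fst[of 0] n1 f0 by simp
      moreover obtain x where "nbr T a = {x}" using la(1) card_1_singletonE by blast
      ultimately have "nbr T a = {f 1}" by simp
      then show ?thesis using 1 i f0 n1 unfolding S_def by auto
    next
      case 2
      have "f (n - 1) \<in> nbr T b" using fst'[of "n - 1"] n1 fn by simp
      moreover obtain x where "nbr T b = {x}" using la(2) card_1_singletonE by blast
      ultimately have "nbr T b = {f (n - 1)}" by simp
      then show ?thesis using 2 i fn unfolding S_def by auto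
    next
      case 3
      then show ?thesis using mid[OF 3] i unfolding S_def by auto
    qed
  qed
  have "(a, c) \<in> ?R\<^sup>*" using con ab unfolding graph_connected_def by blast
  then have "c \<in> S" using closed_reach closed f0 unfolding S_def by blast
  then obtain i where i: "i \<le> n" "c = f i" unfolding S_def by blast
  consider "i = 0" | "i = n" | "0 < i" "i < n" using i by arith
  then show False
  proof cases
    case 1 then show ?thesis using i f0 ab by simp
  next
    case 2 then show ?thesis using i fn ab by simp
  next
    case 3
    have "card (nbr T c) = 2" using mid[OF 3] i inj 3 by simp
    then show ?thesis using la by simp
  qed
qed

lemma card_pos_nbr:
  assumes ep: "edges_on P T" and fin: "finite P" and con: "graph_connected P T"
    and v: "v \<in> P" "w \<in> P" "v \<noteq> w"
  shows "1 \<le> card (nbr T v)"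
proof -
  have "(v, w) \<in> (adj T)\<^sup>*" using con v unfolding graph_connected_def by blast
  then obtain y where "(v, y) \<in> adj T" using v(3) by (meson converse_rtranclE)
  then have "y \<in> nbr T v" using adj_iff by metis
  then have "nbr T v \<noteq> {}" by auto
  then show ?thesis using nbr_fin[OF fin ep] by (simp add: Suc_leI card_gt_0_iff)
qed

lemma card_sub2: "finite X \<Longrightarrow> X \<subseteq> {a, b} \<Longrightarrow> card X = 2 \<Longrightarrow> X = {a, b}"
proof -
  assume f: "finite X" and s: "X \<subseteq> {a, b}" and c: "card X = 2"
  have "card {a, b} \<le> 2" by (cases "a = b") simp_all
  moreover have "card X \<le> card {a, b}" by (rule card_mono) (simp_all add: s)
  ultimately have "card X = card {a, b}" using c by linarith
  then show "X = {a, b}" using card_subset_eq[of "{a, b}" X] s by simp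
qed

lemma branch:
  assumes ep: "edges_on P T" and fin: "finite P" and con: "graph_connected P T"
    and d2: "\<forall>v\<in>P. card (nbr T v) \<le> 2" and d1: "\<forall>v\<in>P. 1 \<le> card (nbr T v)"
    and inP: "c0 \<in> P" "u1 \<in> P" "u2 \<in> P" "v1 \<in> P" "v2 \<in> P" "w1 \<in> P" "w2 \<in> P"
    and dis: "distinct [c0, u1, u2, v1, v2, w1, w2]"
    and nv2: "nbr T v2 \<subseteq> {v1, u2}" and nw2: "nbr T w2 \<subseteq> {w1, u2}"
    and nv1: "nbr T v1 \<subseteq> {u2, v2, w1, u1}" and nw1: "nbr T w1 \<subseteq> {u2, w2, v1, u1}"
  shows "\<exists>x\<in>{v1, v2, w1, w2}. card (nbr T x) = 1"
proof (rule ccontr)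
  assume "\<not> ?thesis"
  then have ne1: "card (nbr T x) \<noteq> 1" if "x \<in> {v1, v2, w1, w2}" for x using that by blast
  have c2: "card (nbr T x) = 2" if "x \<in> {v1, v2, w1, w2}" for x
  proof -
    have "x \<in> P" using that inP by auto
    then have "card (nbr T x) \<le> 2" "1 \<le> card (nbr T x)" using d1 d2 by auto
    then show ?thesis using ne1[OF that] by linarith
  qed
  have fn: "finite (nbr T x)" for x using nbr_fin[OF fin ep] .
  have R: "c0 \<in> S" if a: "\<forall>z\<in>S. nbr T z \<subseteq> S" "v1 \<in> S" for S
  proof -
    have "(v1, c0) \<in> (adj T)\<^sup>*" using con inP unfolding graph_connected_def by blast
    then show ?thesis using closed_reach a by blast
  qed
  have Nv2: "nbr T v2 = {v1, u2}" using card_sub2[OF fn nv2 c2] by simp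
  have Nw2: "nbr T w2 = {w1, u2}" using card_sub2[OF fn nw2 c2] by simp
  have Nu2: "nbr T u2 = {v2, w2}"
  proof (rule two_card[OF fn])
    show "card (nbr T u2) \<le> 2" using d2 inP by simp
    show "v2 \<in> nbr T u2" using Nv2 nbr_sym by blast
    show "w2 \<in> nbr T u2" using Nw2 nbr_sym by blast
    show "v2 \<noteq> w2" using dis by simp
  qed
  have v2v1: "v2 \<in> nbr T v1" using Nv2 nbr_sym by blast
  have u2v1: "u2 \<notin> nbr T v1"
  proof
    assume "u2 \<in> nbr T v1"
    then have "v1 \<in> nbr T u2" by (rule nbr_sym[THEN iffD1])
    then show False using Nu2 dis by simp
  qed
  have w2w1: "w2 \<in> nbr T w1" using Nw2 nbr_sym by blast
  have u2w1: "u2 \<notin> nbr T w1"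
  proof
    assume "u2 \<in> nbr T w1"
    then have "w1 \<in> nbr T u2" by (rule nbr_sym[THEN iffD1])
    then show False using Nu2 dis by simp
  qed
  obtain x where x: "x \<in> nbr T v1" "x \<noteq> v2"
  proof -
    have "\<not> nbr T v1 \<subseteq> {v2}"
    proof
      assume "nbr T v1 \<subseteq> {v2}"
      then have "card (nbr T v1) \<le> card {v2}" by (rule card_mono[rotated]) simp
      then show False using c2[of v1] by simp
    qed
    then show ?thesis using that by blast
  qed
  have xc: "x = w1 \<or> x = u1" using x nv1 u2v1 by auto
  have Nv1: "nbr T v1 = {v2, x}"
    by (rule two_card[OF fn]) (use c2[of v1] v2v1 x in auto)
  obtain y where y: "y \<in> nbr T w1" "y \<noteq> w2"
  proof -
    have "\<not> nbr T w1 \<subseteq> {w2}"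
    proof
      assume "nbr T w1 \<subseteq> {w2}"
      then have "card (nbr T w1) \<le> card {w2}" by (rule card_mono[rotated]) simp
      then show False using c2[of w1] by simp
    qed
    then show ?thesis using that by blast
  qed
  have yc: "y = v1 \<or> y = u1" using y nw1 u2w1 by auto
  have Nw1: "nbr T w1 = {w2, y}"
    by (rule two_card[OF fn]) (use c2[of w1] w2w1 y in auto)
  show False
  proof (cases "x = w1")
    case True
    then have "v1 \<in> nbr T w1" using Nv1 nbr_sym by blast
    then have yv: "y = v1" using Nw1 dis by auto
    let ?S = "{v1, v2, u2, w2, w1}"
    have "\<forall>z\<in>?S. nbr T z \<subseteq> ?S" using Nv1 Nv2 Nu2 Nw2 Nw1 True yv by auto
    then have "c0 \<in> ?S" using R by blast
    then show False using dis by auto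
  next
    case False
    then have xu: "x = u1" using xc by simp
    have yu: "y = u1"
    proof (rule ccontr)
      assume "y \<noteq> u1"
      then have "y = v1" using yc by simp
      then have "w1 \<in> nbr T v1" using Nw1 nbr_sym by blast
      then show False using Nv1 xu dis by auto
    qed
    have Nu1: "nbr T u1 = {v1, w1}"
    proof (rule two_card[OF fn])
      show "card (nbr T u1) \<le> 2" using d2 inP by simp
      show "v1 \<in> nbr T u1" using Nv1 xu nbr_sym by blast
      show "w1 \<in> nbr T u1" using Nw1 yu nbr_sym by blast
      show "v1 \<noteq> w1" using dis by simp
    qed
    let ?S = "{u1, v1, v2, u2, w2, w1}"
    have "\<forall>z\<in>?S. nbr T z \<subseteq> ?S" using Nv1 Nv2 Nu2 Nw2 Nw1 Nu1 xu yu by auto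
    then have "c0 \<in> ?S" using R by blast
    then show False using dis by auto
  qed
qed

lemma exists_st:
  assumes fin: "finite P" and ep: "edges_on P T0" and con: "graph_connected P T0"
  shows "\<exists>T\<subseteq>T0. spanning_tree P T"
proof -
  let ?C = "\<lambda>T. T \<subseteq> T0 \<and> graph_connected P T"
  have "?C T0" using con by simp
  then obtain T where T: "?C T" and Tmin: "\<And>T'. ?C T' \<Longrightarrow> card T \<le> card T'"
    using ex_has_least_nat[of ?C T0 card] by blast
  have finT0: "finite T0" using edges_on_finite[OF fin ep] .
  have finT: "finite T" using T finT0 finite_subset by blast
  have "edges_on P T" using ep T unfolding edges_on_def by blast
  moreover have "\<not> graph_connected P (T - {e})" if e: "e \<in> T" for e
  proof
    assume "graph_connected P (T - {e})"
    then have "?C (T - {e})" using T by blast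
    then have "card T \<le> card (T - {e})" by (rule Tmin)
    moreover have "card (T - {e}) < card T" by (rule card_Diff1_less[OF finT e])
    ultimately show False by simp
  qed
  ultimately show ?thesis using T unfolding spanning_tree_def by blast
qed

lemma max_edge_ge:
  assumes fin: "finite P" and ep: "edges_on P T" and e: "{p, q} \<in> T"
  shows "dist p q \<le> max_edge T"
proof -
  have sub: "{dist p q | p q. {p, q} \<in> T} \<subseteq> (\<lambda>(p, q). dist p q) ` (P \<times> P)"
  proof
    fix d assume "d \<in> {dist p q | p q. {p, q} \<in> T}"
    then obtain a b where "d = dist a b" "{a, b} \<in> T" by blast
    then show "d \<in> (\<lambda>(p, q). dist p q) ` (P \<times> P)" using edge_props[OF ep] by force
  qed
  have "finite {dist p q | p q. {p, q} \<in> T}" using finite_subset[OF sub] fin by simp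
  then show ?thesis unfolding max_edge_def using e by (intro Max_ge) auto
qed

lemma max_edge_le:
  assumes fin: "finite P" and ep: "edges_on P T" and c: "0 \<le> c"
    and h: "\<And>p q. {p, q} \<in> T \<Longrightarrow> dist p q \<le> c"
  shows "max_edge T \<le> c"
proof -
  have sub: "{dist p q | p q. {p, q} \<in> T} \<subseteq> (\<lambda>(p, q). dist p q) ` (P \<times> P)"
  proof
    fix d assume "d \<in> {dist p q | p q. {p, q} \<in> T}"
    then obtain a b where "d = dist a b" "{a, b} \<in> T" by blast
    then show "d \<in> (\<lambda>(p, q). dist p q) ` (P \<times> P)" using edge_props[OF ep] by force
  qed
  have "finite {dist p q | p q. {p, q} \<in> T}" using finite_subset[OF sub] fin by simp
  then show ?thesis unfolding max_edge_def using c h by (intro Max.boundedI) auto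
qed

definition pedges :: "point list \<Rightarrow> point set set" where
  "pedges xs = {{xs ! i, xs ! Suc i} | i. Suc i < length xs}"

lemma pedges_on: "distinct xs \<Longrightarrow> edges_on (set xs) (pedges xs)"
  unfolding edges_on_def pedges_def
proof
  fix e assume d: "distinct xs" and "e \<in> {{xs ! i, xs ! Suc i} | i. Suc i < length xs}"
  then obtain i where i: "e = {xs ! i, xs ! Suc i}" "Suc i < length xs" by blast
  have "xs ! i \<noteq> xs ! Suc i" using d i(2) by (simp add: nth_eq_iff_index_eq)
  moreover have "xs ! i \<in> set xs" "xs ! Suc i \<in> set xs" using i(2) by auto
  ultimately show "e \<in> {{p, q} |p q. p \<in> set xs \<and> q \<in> set xs \<and> p \<noteq> q}" using i(1) by blast
qed

lemma adj_sym: "(p, q) \<in> adj T \<Longrightarrow> (q, p) \<in> adj T"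
  by (simp add: adj_def insert_commute)

lemma rtr_sym: "(p, q) \<in> (adj T)\<^sup>* \<Longrightarrow> (q, p) \<in> (adj T)\<^sup>*"
proof (induction rule: rtrancl_induct)
  case base then show ?case by simp
next
  case (step y z)
  then have "(z, y) \<in> adj T" using adj_sym by blast
  then show ?case using step(3) by (rule converse_rtrancl_into_rtrancl)
qed

lemma conn_from_root:
  assumes "r \<in> P" "\<And>p. p \<in> P \<Longrightarrow> (r, p) \<in> (adj T)\<^sup>*"
  shows "graph_connected P T"
  unfolding graph_connected_def
proof (intro ballI)
  fix p q assume "p \<in> P" "q \<in> P"
  then have "(p, r) \<in> (adj T)\<^sup>*" "(r, q) \<in> (adj T)\<^sup>*" using assms rtr_sym by blast+
  then show "(p, q) \<in> (adj T)\<^sup>*" by (rule rtrancl_trans)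
qed

lemma pedges_conn:
  assumes "xs \<noteq> []" shows "graph_connected (set xs) (pedges xs)"
proof (rule conn_from_root)
  show "xs ! 0 \<in> set xs" using assms by simp
  have "i < length xs \<Longrightarrow> (xs ! 0, xs ! i) \<in> (adj (pedges xs))\<^sup>*" for i
  proof (induction i)
    case 0 then show ?case by simp
  next
    case (Suc i)
    have "{xs ! i, xs ! Suc i} \<in> pedges xs" using Suc.prems unfolding pedges_def by blast
    then have "(xs ! i, xs ! Suc i) \<in> adj (pedges xs)" by (simp add: adj_def)
    then show ?case using Suc by (meson Suc_lessD rtrancl.rtrancl_into_rtrancl)
  qed
  then show "\<And>p. p \<in> set xs \<Longrightarrow> (xs ! 0, p) \<in> (adj (pedges xs))\<^sup>*" by (metis in_set_conv_nth)
qed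

lemma pedges_deg:
  assumes d: "distinct xs" shows "deg (pedges xs) v \<le> 2"
proof (cases "v \<in> set xs")
  case False
  have eq: "{e \<in> pedges xs. v \<in> e} = {}"
    using False unfolding pedges_def by (auto dest: nth_mem Suc_lessD)
  show ?thesis unfolding deg_def eq by simp
next
  case True
  then obtain j where j: "j < length xs" "v = xs ! j" by (metis in_set_conv_nth)
  have "{e \<in> pedges xs. v \<in> e} \<subseteq> {{xs ! (j - 1), v}, {v, xs ! Suc j}}"
  proof
    fix e assume "e \<in> {e \<in> pedges xs. v \<in> e}"
    then obtain i where i: "e = {xs ! i, xs ! Suc i}" "Suc i < length xs" "v \<in> e"
      unfolding pedges_def by blast
    then have "v = xs ! i \<or> v = xs ! Suc i" by blast
    then have "i = j \<or> Suc i = j" using d i(2) j by (auto simp: nth_eq_iff_index_eq)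
    then show "e \<in> {{xs ! (j - 1), v}, {v, xs ! Suc j}}" using i j by auto
  qed
  then have "card {e \<in> pedges xs. v \<in> e} \<le> card {{xs ! (j - 1), v}, {v, xs ! Suc j}}"
    by (rule card_mono[rotated]) simp
  also have "\<dots> \<le> 2" by (simp add: card_insert_le_m1)
  finally show ?thesis unfolding deg_def .
qed

definition lat :: "int \<times> int \<Rightarrow> point" where
  "lat s = vector [real_of_int (fst s) + real_of_int (snd s) / 2, real_of_int (snd s) * sqrt 3 / 2]"

definition nd :: "int \<times> int \<Rightarrow> int \<times> int \<Rightarrow> int" where
  "nd s t = (fst s - fst t)^2 + (fst s - fst t) * (snd s - snd t) + (snd s - snd t)^2"

lemma dist_lat: "dist (lat s) (lat t) = sqrt (real_of_int (nd s t))"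
proof -
  have "dist (lat s) (lat t) = sqrt ((lat s - lat t) \<bullet> (lat s - lat t))"
    by (simp add: dist_norm norm_eq_sqrt_inner)
  also have "(lat s - lat t) \<bullet> (lat s - lat t) = real_of_int (nd s t)"
    by (simp add: inner_vec_def sum_2 lat_def nd_def power2_eq_square algebra_simps)
  finally show ?thesis .
qed

lemma nd_zero: "nd s t = 0 \<Longrightarrow> s = t"
proof -
  assume h: "nd s t = 0"
  define x where "x = fst s - fst t"
  define y where "y = snd s - snd t"
  have "x^2 + x * y + y^2 = 0" using h by (simp add: nd_def x_def y_def)
  then have "(2 * x + y)^2 + 3 * y^2 = 0" by (simp add: power2_eq_square algebra_simps)
  moreover have "(2 * x + y)^2 \<ge> 0" "y^2 \<ge> 0" by simp_all
  ultimately have "y^2 = 0" "(2 * x + y)^2 = 0" by linarith+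
  then have "y = 0" "x = 0" by simp_all
  then show "s = t" by (simp add: x_def y_def prod_eq_iff)
qed

lemma nd_nonneg: "0 \<le> nd s t"
proof -
  define x where "x = fst s - fst t"
  define y where "y = snd s - snd t"
  have "4 * nd s t = (2 * x + y)^2 + 3 * y^2"
    by (simp add: nd_def x_def y_def power2_eq_square algebra_simps)
  moreover have "(2 * x + y)^2 \<ge> 0" "y^2 \<ge> 0" by simp_all
  ultimately show ?thesis by linarith
qed

lemma lat_eq_iff: "lat s = lat t \<longleftrightarrow> s = t"
proof
  assume "lat s = lat t"
  then have "sqrt (real_of_int (nd s t)) = 0" using dist_lat[of s t] by simp
  then have "nd s t = 0" by simp
  then show "s = t" by (rule nd_zero)
qed simp

lemma inj_lat: "inj lat"
  by (simp add: inj_def lat_eq_iff)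

lemma dist_lat_ge1: "s \<noteq> t \<Longrightarrow> 1 \<le> dist (lat s) (lat t)"
proof -
  assume "s \<noteq> t"
  then have "nd s t \<noteq> 0" using nd_zero by blast
  then have "1 \<le> nd s t" using nd_nonneg[of s t] by linarith
  then show ?thesis unfolding dist_lat by simp
qed

lemma dist_lat_lt7: "dist (lat s) (lat t) < sqrt 7 \<longleftrightarrow> nd s t < 7"
  unfolding dist_lat by simp

definition S19 :: "(int \<times> int) set" where
  "S19 = {(0,0),(1,0),(2,0),(2,1),(2,2),(3,-1),(4,-2),
          (-1,1),(-2,2),(-3,2),(-4,2),(-2,3),(-2,4),
          (0,-1),(0,-2),(1,-3),(2,-4),(-1,-2),(-2,-2)}"

definition L19 :: "(int \<times> int) list" where
  "L19 = [(0,0),(1,0),(2,0),(2,1),(2,2),(3,-1),(4,-2),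
          (-1,1),(-2,2),(-3,2),(-4,2),(-2,3),(-2,4),
          (0,-1),(0,-2),(1,-3),(2,-4),(-1,-2),(-2,-2)]"

lemma L19_set: "set L19 = S19" by (simp add: L19_def S19_def)
lemma L19_dist: "distinct L19" by (simp add: L19_def)
lemma card_S19: "card S19 = 19"
proof -
  have "card S19 = length L19" using distinct_card[OF L19_dist] L19_set by simp
  then show ?thesis by (simp add: L19_def)
qed

definition P0 :: "point set" where "P0 = lat ` S19"

lemma finite_P0: "finite P0" by (simp add: P0_def S19_def)
lemma card_P0: "card P0 = 19"
  unfolding P0_def using card_image[OF inj_on_subset[OF inj_lat subset_UNIV]] card_S19 by simp

lemma nbr_conc:
  assumes ep: "edges_on P0 T" and sh: "\<forall>p q. {p, q} \<in> T \<longrightarrow> dist p q < sqrt 7"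
    and t: "t \<in> S19" and h: "\<forall>s\<in>S19. s \<noteq> t \<longrightarrow> nd t s < 7 \<longrightarrow> s \<in> A"
  shows "nbr T (lat t) \<subseteq> lat ` A"
proof
  fix q assume q: "q \<in> nbr T (lat t)"
  then have e: "{lat t, q} \<in> T" by (simp add: nbr_def)
  then have "q \<in> P0" "lat t \<noteq> q" using edge_props[OF ep e] by auto
  then obtain s where s: "s \<in> S19" "q = lat s" "s \<noteq> t" unfolding P0_def by auto
  have "dist (lat t) (lat s) < sqrt 7" using sh[rule_format, OF e] s(2) by simp
  then have "nd t s < 7" by (simp add: dist_lat_lt7)
  then have "s \<in> A" using h s(1,3) by simp
  then show "q \<in> lat ` A" using s by blast
qed

lemma latP: "s \<in> S19 \<Longrightarrow> lat s \<in> P0"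
  unfolding P0_def by (rule imageI)

lemma key:
  assumes st: "spanning_tree P0 T" and dg: "\<forall>v\<in>P0. deg T v \<le> 2"
  shows "\<exists>p q. {p, q} \<in> T \<and> sqrt 7 \<le> dist p q"
proof (rule ccontr)
  assume "\<not> ?thesis"
  then have sh: "\<forall>p q. {p, q} \<in> T \<longrightarrow> dist p q < sqrt 7" by (meson not_le)
  have ep: "edges_on P0 T" and con: "graph_connected P0 T" using st unfolding spanning_tree_def by auto
  have fin: "finite P0" by (rule finite_P0)
  have d2: "\<forall>v\<in>P0. card (nbr T v) \<le> 2" using dg deg_nbr[OF ep] by simp
  have d1: "\<forall>v\<in>P0. 1 \<le> card (nbr T v)"
  proof
    fix v assume v: "v \<in> P0"
    have a: "lat (0,0) \<in> P0" "lat (1,0) \<in> P0" by (simp_all add: latP S19_def)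
    show "1 \<le> card (nbr T v)"
    proof (cases "v = lat (0,0)")
      case True
      then show ?thesis using card_pos_nbr[OF ep fin con v a(2)] by (simp add: lat_eq_iff)
    next
      case False
      then show ?thesis using card_pos_nbr[OF ep fin con v a(1)] by simp
    qed
  qed
  note B = branch[OF ep fin con d2 d1]
  have "\<exists>x\<in>{lat (2,1), lat (2,2), lat (3,-1), lat (4,-2)}. card (nbr T x) = 1"
  proof (rule B[of "lat (0,0)" "lat (1,0)" "lat (2,0)"])
    show "nbr T (lat (2,2)) \<subseteq> {lat (2,1), lat (2,0)}"
      using nbr_conc[OF ep sh, of "(2,2)" "{(2,1),(2,0)}"] by (simp add: S19_def nd_def)
    show "nbr T (lat (4,-2)) \<subseteq> {lat (3,-1), lat (2,0)}"
      using nbr_conc[OF ep sh, of "(4,-2)" "{(3,-1),(2,0)}"] by (simp add: S19_def nd_def)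
    show "nbr T (lat (2,1)) \<subseteq> {lat (2,0), lat (2,2), lat (3,-1), lat (1,0)}"
      using nbr_conc[OF ep sh, of "(2,1)" "{(2,0),(2,2),(3,-1),(1,0)}"] by (simp add: S19_def nd_def)
    show "nbr T (lat (3,-1)) \<subseteq> {lat (2,0), lat (4,-2), lat (2,1), lat (1,0)}"
      using nbr_conc[OF ep sh, of "(3,-1)" "{(2,0),(4,-2),(2,1),(1,0)}"] by (simp add: S19_def nd_def)
  qed (simp_all add: latP S19_def lat_eq_iff)
  then obtain x1 where x1: "x1 \<in> {lat (2,1), lat (2,2), lat (3,-1), lat (4,-2)}" "card (nbr T x1) = 1" by blast
  have "\<exists>x\<in>{lat (-3,2), lat (-4,2), lat (-2,3), lat (-2,4)}. card (nbr T x) = 1"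
  proof (rule B[of "lat (0,0)" "lat (-1,1)" "lat (-2,2)"])
    show "nbr T (lat (-4,2)) \<subseteq> {lat (-3,2), lat (-2,2)}"
      using nbr_conc[OF ep sh, of "(-4,2)" "{(-3,2),(-2,2)}"] by (simp add: S19_def nd_def)
    show "nbr T (lat (-2,4)) \<subseteq> {lat (-2,3), lat (-2,2)}"
      using nbr_conc[OF ep sh, of "(-2,4)" "{(-2,3),(-2,2)}"] by (simp add: S19_def nd_def)
    show "nbr T (lat (-3,2)) \<subseteq> {lat (-2,2), lat (-4,2), lat (-2,3), lat (-1,1)}"
      using nbr_conc[OF ep sh, of "(-3,2)" "{(-2,2),(-4,2),(-2,3),(-1,1)}"] by (simp add: S19_def nd_def)
    show "nbr T (lat (-2,3)) \<subseteq> {lat (-2,2), lat (-2,4), lat (-3,2), lat (-1,1)}"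
      using nbr_conc[OF ep sh, of "(-2,3)" "{(-2,2),(-2,4),(-3,2),(-1,1)}"] by (simp add: S19_def nd_def)
  qed (simp_all add: latP S19_def lat_eq_iff)
  then obtain x2 where x2: "x2 \<in> {lat (-3,2), lat (-4,2), lat (-2,3), lat (-2,4)}" "card (nbr T x2) = 1" by blast
  have "\<exists>x\<in>{lat (1,-3), lat (2,-4), lat (-1,-2), lat (-2,-2)}. card (nbr T x) = 1"
  proof (rule B[of "lat (0,0)" "lat (0,-1)" "lat (0,-2)"])
    show "nbr T (lat (2,-4)) \<subseteq> {lat (1,-3), lat (0,-2)}"
      using nbr_conc[OF ep sh, of "(2,-4)" "{(1,-3),(0,-2)}"] by (simp add: S19_def nd_def)
    show "nbr T (lat (-2,-2)) \<subseteq> {lat (-1,-2), lat (0,-2)}"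
      using nbr_conc[OF ep sh, of "(-2,-2)" "{(-1,-2),(0,-2)}"] by (simp add: S19_def nd_def)
    show "nbr T (lat (1,-3)) \<subseteq> {lat (0,-2), lat (2,-4), lat (-1,-2), lat (0,-1)}"
      using nbr_conc[OF ep sh, of "(1,-3)" "{(0,-2),(2,-4),(-1,-2),(0,-1)}"] by (simp add: S19_def nd_def)
    show "nbr T (lat (-1,-2)) \<subseteq> {lat (0,-2), lat (-2,-2), lat (1,-3), lat (0,-1)}"
      using nbr_conc[OF ep sh, of "(-1,-2)" "{(0,-2),(-2,-2),(1,-3),(0,-1)}"] by (simp add: S19_def nd_def)
  qed (simp_all add: latP S19_def lat_eq_iff)
  then obtain x3 where x3: "x3 \<in> {lat (1,-3), lat (2,-4), lat (-1,-2), lat (-2,-2)}" "card (nbr T x3) = 1" by blast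
  have inP: "x1 \<in> P0" "x2 \<in> P0" "x3 \<in> P0" using x1(1) x2(1) x3(1) by (auto simp: latP S19_def)
  have ne: "x1 \<noteq> x2" "x1 \<noteq> x3" "x2 \<noteq> x3" using x1(1) x2(1) x3(1) by (auto simp: lat_eq_iff)
  show False by (rule leaf3[OF ep fin con d2 inP ne x1(2) x2(2) x3(2)])
qed

definition T0u :: "point set set" where
  "T0u = {{p, q} | p q. p \<in> P0 \<and> q \<in> P0 \<and> p \<noteq> q \<and> dist p q \<le> 1}"

lemma T0u_on: "edges_on P0 T0u"
  unfolding edges_on_def T0u_def by blast

lemma T0u_short: "{p, q} \<in> T0u \<Longrightarrow> dist p q \<le> 1"
proof -
  assume "{p, q} \<in> T0u"
  then obtain a b where ab: "{p, q} = {a, b}" "dist a b \<le> 1" unfolding T0u_def by blast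
  then have "(p = a \<and> q = b) \<or> (p = b \<and> q = a)" by (simp add: doubleton_eq_iff)
  then show ?thesis using ab(2) by (auto simp: dist_commute)
qed

lemma ustep:
  assumes "(r, lat s) \<in> (adj T0u)\<^sup>*" "s \<in> S19" "t \<in> S19" "nd s t = 1"
  shows "(r, lat t) \<in> (adj T0u)\<^sup>*"
proof -
  have "s \<noteq> t" using assms(4) nd_zero[of s t] by (auto simp: nd_def)
  then have "lat s \<noteq> lat t" by (simp add: lat_eq_iff)
  moreover have "dist (lat s) (lat t) = 1" using assms(4) by (simp add: dist_lat)
  ultimately have "{lat s, lat t} \<in> T0u" unfolding T0u_def using latP assms(2,3) by fastforce
  then have "(lat s, lat t) \<in> adj T0u" by (simp add: adj_def)
  then show ?thesis using assms(1) by (rule rtrancl_into_rtrancl[rotated])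
qed

lemma T0u_conn: "graph_connected P0 T0u"
proof (rule conn_from_root)
  show "lat (0,0) \<in> P0" by (simp add: latP S19_def)
  let ?r = "lat (0,0)"
  have h00: "(?r, lat (0,0)) \<in> (adj T0u)\<^sup>*" by simp
  have h10: "(?r, lat (1,0)) \<in> (adj T0u)\<^sup>*" by (rule ustep[OF h00]) (simp_all add: S19_def nd_def)
  have h20: "(?r, lat (2,0)) \<in> (adj T0u)\<^sup>*" by (rule ustep[OF h10]) (simp_all add: S19_def nd_def)
  have h21: "(?r, lat (2,1)) \<in> (adj T0u)\<^sup>*" by (rule ustep[OF h20]) (simp_all add: S19_def nd_def)
  have h22: "(?r, lat (2,2)) \<in> (adj T0u)\<^sup>*" by (rule ustep[OF h21]) (simp_all add: S19_def nd_def)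
  have h3: "(?r, lat (3,-1)) \<in> (adj T0u)\<^sup>*" by (rule ustep[OF h20]) (simp_all add: S19_def nd_def)
  have h4: "(?r, lat (4,-2)) \<in> (adj T0u)\<^sup>*" by (rule ustep[OF h3]) (simp_all add: S19_def nd_def)
  have g1: "(?r, lat (-1,1)) \<in> (adj T0u)\<^sup>*" by (rule ustep[OF h00]) (simp_all add: S19_def nd_def)
  have g2: "(?r, lat (-2,2)) \<in> (adj T0u)\<^sup>*" by (rule ustep[OF g1]) (simp_all add: S19_def nd_def)
  have g3: "(?r, lat (-3,2)) \<in> (adj T0u)\<^sup>*" by (rule ustep[OF g2]) (simp_all add: S19_def nd_def)
  have g4: "(?r, lat (-4,2)) \<in> (adj T0u)\<^sup>*" by (rule ustep[OF g3]) (simp_all add: S19_def nd_def)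
  have g5: "(?r, lat (-2,3)) \<in> (adj T0u)\<^sup>*" by (rule ustep[OF g2]) (simp_all add: S19_def nd_def)
  have g6: "(?r, lat (-2,4)) \<in> (adj T0u)\<^sup>*" by (rule ustep[OF g5]) (simp_all add: S19_def nd_def)
  have k1: "(?r, lat (0,-1)) \<in> (adj T0u)\<^sup>*" by (rule ustep[OF h00]) (simp_all add: S19_def nd_def)
  have k2: "(?r, lat (0,-2)) \<in> (adj T0u)\<^sup>*" by (rule ustep[OF k1]) (simp_all add: S19_def nd_def)
  have k3: "(?r, lat (1,-3)) \<in> (adj T0u)\<^sup>*" by (rule ustep[OF k2]) (simp_all add: S19_def nd_def)
  have k4: "(?r, lat (2,-4)) \<in> (adj T0u)\<^sup>*" by (rule ustep[OF k3]) (simp_all add: S19_def nd_def)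
  have k5: "(?r, lat (-1,-2)) \<in> (adj T0u)\<^sup>*" by (rule ustep[OF k2]) (simp_all add: S19_def nd_def)
  have k6: "(?r, lat (-2,-2)) \<in> (adj T0u)\<^sup>*" by (rule ustep[OF k5]) (simp_all add: S19_def nd_def)
  have all: "\<forall>s\<in>S19. (?r, lat s) \<in> (adj T0u)\<^sup>*"
    unfolding S19_def using h00 h10 h20 h21 h22 h3 h4 g1 g2 g3 g4 g5 g6 k1 k2 k3 k4 k5 k6 by simp
  show "\<And>p. p \<in> P0 \<Longrightarrow> (?r, p) \<in> (adj T0u)\<^sup>*" using all unfolding P0_def by blast
qed

lemma st_ge1:
  assumes st: "spanning_tree P0 T" shows "1 \<le> max_edge T"
proof -
  have ep: "edges_on P0 T" and con: "graph_connected P0 T" using st unfolding spanning_tree_def by auto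
  have a: "lat (0,0) \<in> P0" "lat (1,0) \<in> P0" by (simp_all add: latP S19_def)
  have "1 \<le> card (nbr T (lat (0,0)))"
    by (rule card_pos_nbr[OF ep finite_P0 con a]) (simp add: lat_eq_iff)
  then obtain y where y: "y \<in> nbr T (lat (0,0))" by (metis card.empty ex_in_conv not_one_le_zero)
  then have e: "{lat (0,0), y} \<in> T" by (simp add: nbr_def)
  then have "y \<in> P0" "lat (0,0) \<noteq> y" using edge_props[OF ep e] by auto
  then obtain s where s: "s \<in> S19" "y = lat s" "s \<noteq> (0,0)" unfolding P0_def by auto
  have "1 \<le> dist (lat (0,0)) y" using s dist_lat_ge1[of "(0,0)" s] by simp
  also have "\<dots> \<le> max_edge T" by (rule max_edge_ge[OF finite_P0 ep e])
  finally show ?thesis .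
qed

lemma st_finite: "finite {max_edge T | T. spanning_tree P0 T \<and> Q T}"
proof -
  have "{T. spanning_tree P0 T \<and> Q T} \<subseteq> Pow (Pow P0)"
    unfolding spanning_tree_def edges_on_def by blast
  then have "finite {T. spanning_tree P0 T \<and> Q T}" using finite_P0 by (meson finite_Pow_iff finite_subset)
  then have "finite (max_edge ` {T. spanning_tree P0 T \<and> Q T})" by simp
  moreover have "{max_edge T | T. spanning_tree P0 T \<and> Q T} = max_edge ` {T. spanning_tree P0 T \<and> Q T}" by blast
  ultimately show ?thesis by simp
qed

lemma st_finite0: "finite {max_edge T | T. spanning_tree P0 T}"
proof -
  have "{max_edge T | T. spanning_tree P0 T} = {max_edge T | T. spanning_tree P0 T \<and> True}" by simp
  then show ?thesis using st_finite[of "\<lambda>_. True"] by simp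
qed

lemma bst_P0: "bst_val P0 = 1"
proof -
  have "\<exists>T\<subseteq>T0u. spanning_tree P0 T" by (rule exists_st[OF finite_P0 T0u_on T0u_conn])
  then obtain Tu where Tu: "Tu \<subseteq> T0u" "spanning_tree P0 Tu" by auto
  have ep: "edges_on P0 Tu" using Tu(2) unfolding spanning_tree_def by simp
  have sh: "dist p q \<le> 1" if pq: "{p, q} \<in> Tu" for p q
  proof -
    have "{p, q} \<in> T0u" using Tu(1) pq by (rule subsetD)
    then show ?thesis by (rule T0u_short)
  qed
  have "max_edge Tu \<le> 1" by (rule max_edge_le[OF finite_P0 ep]) (simp_all add: sh)
  then have m1: "max_edge Tu = 1" using st_ge1[OF Tu(2)] by simp
  show ?thesis unfolding bst_val_def
  proof (rule Min_eqI)
    show "finite {max_edge T | T. spanning_tree P0 T}" by (rule st_finite0)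
    fix y assume "y \<in> {max_edge T | T. spanning_tree P0 T}"
    then obtain T where "y = max_edge T" "spanning_tree P0 T" by auto
    then show "1 \<le> y" using st_ge1 by simp
  next
    have "max_edge Tu \<in> {max_edge T | T. spanning_tree P0 T}" using Tu(2) by auto
    then show "1 \<in> {max_edge T | T. spanning_tree P0 T}" using m1 by simp
  qed
qed

lemma bdeg_P0: "sqrt 7 \<le> bdeg_val 2 P0"
proof -
  define xs where "xs = map lat L19"
  have dxs: "distinct xs" unfolding xs_def
    using L19_dist inj_on_subset[OF inj_lat subset_UNIV] by (simp add: distinct_map)
  have sxs: "set xs = P0" unfolding xs_def P0_def using L19_set by simp
  have nxs: "xs \<noteq> []" unfolding xs_def L19_def by simp
  obtain Th where Th: "Th \<subseteq> pedges xs" "spanning_tree P0 Th"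
    using exists_st[of P0 "pedges xs"] pedges_on[OF dxs] pedges_conn[OF nxs] finite_P0 sxs by auto
  have fpe: "finite (pedges xs)" using edges_on_finite[OF finite_P0] pedges_on[OF dxs] sxs by simp
  have dTh: "\<forall>v\<in>P0. deg Th v \<le> 2"
  proof
    fix v assume "v \<in> P0"
    have "deg Th v \<le> deg (pedges xs) v" unfolding deg_def
      by (rule card_mono) (use fpe Th(1) in auto)
    also have "\<dots> \<le> 2" by (rule pedges_deg[OF dxs])
    finally show "deg Th v \<le> 2" .
  qed
  let ?A = "{max_edge T | T. spanning_tree P0 T \<and> (\<forall>v\<in>P0. deg T v \<le> 2)}"
  have fA: "finite ?A" by (rule st_finite)
  have nA: "?A \<noteq> {}" using Th(2) dTh by blast
  have geA: "\<forall>a\<in>?A. sqrt 7 \<le> a"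
  proof
    fix a assume "a \<in> ?A"
    then obtain T where T: "a = max_edge T" "spanning_tree P0 T" "\<forall>v\<in>P0. deg T v \<le> 2" by blast
    obtain p q where pq: "{p, q} \<in> T" "sqrt 7 \<le> dist p q" using key[OF T(2,3)] by blast
    have ep: "edges_on P0 T" using T(2) unfolding spanning_tree_def by auto
    show "sqrt 7 \<le> a" using pq(2) max_edge_ge[OF finite_P0 ep pq(1)] T(1) by simp
  qed
  show ?thesis unfolding bdeg_val_def using Min_ge_iff[OF fA nA] geA by blast
qed

theorem mainTheorem3:
  shows "beta 2 \<ge> ereal (sqrt 7) \<and>
    (\<exists>P :: point set. finite P \<and> card P = 19 \<and> bst_val P = 1 \<and>
       (\<forall>T. spanning_tree P T \<and> (\<forall>v\<in>P. deg T v \<le> 2) \<longrightarrow>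
          (\<exists>p q. {p, q} \<in> T \<and> dist p q \<ge> sqrt 7)))"
proof
  have "ereal (bdeg_val 2 P0 / bst_val P0) \<in>
        {ereal (bdeg_val 2 P / bst_val P) | P. finite P \<and> card P \<ge> 2}"
    using finite_P0 card_P0 by force
  then have "ereal (bdeg_val 2 P0 / bst_val P0) \<le> beta 2" unfolding beta_def by (rule Sup_upper)
  moreover have "ereal (sqrt 7) \<le> ereal (bdeg_val 2 P0 / bst_val P0)" using bdeg_P0 bst_P0 by simp
  ultimately show "beta 2 \<ge> ereal (sqrt 7)" by (rule order_trans[rotated])
next
  show "\<exists>P :: point set. finite P \<and> card P = 19 \<and> bst_val P = 1 \<and>
       (\<forall>T. spanning_tree P T \<and> (\<forall>v\<in>P. deg T v \<le> 2) \<longrightarrow>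
          (\<exists>p q. {p, q} \<in> T \<and> dist p q \<ge> sqrt 7))"
    using finite_P0 card_P0 bst_P0 key by blast
qed

end
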